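(* Let $g_N\in H_N^{\mathrm{rw}}$ converge strongly to $g\in H^{\mathrm{bm}}$ with respect to the Hilbert space convergence $H_N^{\mathrm{rw}}\to H^{\mathrm{bm}}$. Define $\hat g_N=g_N-g_N(0)\mathbf 1_{\{0\}}$ (viewed as an element of $H_N^{\mathrm{sip}}$) and $\hat g=g-g(0)\mathbf 1_{\{0\}}$, i.e. the element of $H^{\mathrm{sbm}}$ that equals $g$ Lebesgue-a.e. and vanishes at $0$. Then $\hat g_N$ converges strongly to $\hat g$ with respect to the Hilbert space convergence $H_N^{\mathrm{sip}}\to H^{\mathrm{sbm}}$.
   Context: $\gamma>0$; $\mu_N$ gives mass $\frac1N$ to each point of $\frac1N\mathbb Z$; $\nu_{\gamma,N}=\mu_N+\sqrt2\gamma\delta_0$. $H_N^{\mathrm{rw}}=L^2(\frac1N\mathbb Z,\mu_N)$, $H^{\mathrm{bm}}=L^2(\mathbb R,dx)$, with Hilbert convergence witnessed by $C^{\mathrm{rw}}=C_c^\infty(\mathbb R)$ and $\Phi_Nf=f|_{\frac1N\mathbb Z}$. $H_N^{\mathrm{sip}}=L^2(\frac1N\mathbb Z,\nu_{\gamma,N})$, $H^{\mathrm{sbm}}=L^2(\mathbb R,dx+\sqrt2\gamma\delta_0)$, with Hilbert convergence witnessed by $C^{\mathrm{sip}}=\{f+\lambda\mathbf 1_{\{0\}}:f\in C_c^\infty(\mathbb R),\lambda\in\mathbb R\}$ and $\Phi_Nf=f|_{\frac1N\mathbb Z}$. In either setting, $f_N\in H_N$ converges strongly to $f\in H$ if there exist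 $\tilde f_M$ in the respective dense set $C$ with $\|\tilde f_M-f\|_H\to0$ and $\lim_{M\to\infty}\limsup_{N\to\infty}\|\Phi_N\tilde f_M-f_N\|_{H_N}=0$. *)

theory Defs
  imports "HOL-Analysis.Analysis"
begin

text \<open>Elements of H_N on the grid (1/N)Z are represented as h :: int \<Rightarrow> real,
  with h k the value at the point k/N.  Elements of L^2 spaces on the real line are
  represented as functions real \<Rightarrow> real (norms only see a.e./measure-relevant values).\<close>

definition l2_grid :: "(int \<Rightarrow> real) \<Rightarrow> bool" where
  "l2_grid h \<longleftrightarrow> (\<lambda>k. (h k)^2) summable_on UNIV"

definition L2_line :: "(real \<Rightarrow> real) \<Rightarrow> bool" where
  "L2_line f \<longleftrightarrow> f \<in> borel_measurable lebesgue \<and> integrable lebesgue (\<lambda>x. (f x)^2)"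

definition rw_norm :: "nat \<Rightarrow> (int \<Rightarrow> real) \<Rightarrow> real" where
  "rw_norm N h = sqrt ((1 / real N) * (\<Sum>\<^sub>\<infinity>k. (h k)^2))"

definition sip_norm :: "real \<Rightarrow> nat \<Rightarrow> (int \<Rightarrow> real) \<Rightarrow> real" where
  "sip_norm \<gamma> N h = sqrt ((1 / real N) * (\<Sum>\<^sub>\<infinity>k. (h k)^2) + sqrt 2 * \<gamma> * (h 0)^2)"

definition bm_norm :: "(real \<Rightarrow> real) \<Rightarrow> real" where
  "bm_norm f = sqrt (integral\<^sup>L lebesgue (\<lambda>x. (f x)^2))"

definition sbm_norm :: "real \<Rightarrow> (real \<Rightarrow> real) \<Rightarrow> real" where
  "sbm_norm \<gamma> f = sqrt (integral\<^sup>L lebesgue (\<lambda>x. (f x)^2) + sqrt 2 * \<gamma> * (f 0)^2)"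

definition Cc_inf :: "(real \<Rightarrow> real) set" where
  "Cc_inf = {f. (\<forall>n x. (deriv ^^ n) f differentiable (at x)) \<and> compact (closure {x. f x \<noteq> 0})}"

definition C_sip :: "(real \<Rightarrow> real) set" where
  "C_sip = {\<lambda>x. f x + (if x = 0 then c else 0) | f c. f \<in> Cc_inf}"

definition Phi :: "nat \<Rightarrow> (real \<Rightarrow> real) \<Rightarrow> int \<Rightarrow> real" where
  "Phi N f = (\<lambda>k. f (real_of_int k / real N))"

definition strong_conv ::
  "(nat \<Rightarrow> (int \<Rightarrow> real) \<Rightarrow> real) \<Rightarrow> ((real \<Rightarrow> real) \<Rightarrow> real) \<Rightarrow> (real \<Rightarrow> real) set
     \<Rightarrow> (nat \<Rightarrow> int \<Rightarrow> real) \<Rightarrow> (real \<Rightarrow> real) \<Rightarrow> bool" where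
  "strong_conv normN normH C fN f \<longleftrightarrow>
     (\<exists>ft :: nat \<Rightarrow> real \<Rightarrow> real. (\<forall>M. ft M \<in> C) \<and>
        (\<lambda>M. normH (ft M - f)) \<longlonglongrightarrow> 0 \<and>
        (\<lambda>M. limsup (\<lambda>N. ereal (normN N (Phi N (ft M) - fN N)))) \<longlonglongrightarrow> 0)"

definition rw_bm_conv :: "(nat \<Rightarrow> int \<Rightarrow> real) \<Rightarrow> (real \<Rightarrow> real) \<Rightarrow> bool" where
  "rw_bm_conv fN f \<longleftrightarrow> (\<forall>N. l2_grid (fN N)) \<and> L2_line f \<and>
     strong_conv rw_norm bm_norm Cc_inf fN f"

definition sip_sbm_conv :: "real \<Rightarrow> (nat \<Rightarrow> int \<Rightarrow> real) \<Rightarrow> (real \<Rightarrow> real) \<Rightarrow> bool" where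
  "sip_sbm_conv \<gamma> fN f \<longleftrightarrow> (\<forall>N. l2_grid (fN N)) \<and> L2_line f \<and>
     strong_conv (sip_norm \<gamma>) (sbm_norm \<gamma>) C_sip fN f"

end

theory Submission
  imports Defs
begin

lemma AE_ne0: "AE x in lebesgue. x \<noteq> (0::real)"
  by (simp add: AE_completion AE_lborel_singleton)

lemma finite_grid:
  assumes "bounded S" "N > 0"
  shows "finite {k::int. real_of_int k / real N \<in> S}"
proof -
  obtain B where B: "\<And>x. x \<in> S \<Longrightarrow> \<bar>x\<bar> \<le> B"
    using assms(1) bounded_real by blast
  have "{k::int. real_of_int k / real N \<in> S} \<subseteq> {-\<lceil>B * real N\<rceil>..\<lceil>B * real N\<rceil>}"
  proof
    fix k assume "k \<in> {k::int. real_of_int k / real N \<in> S}"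
    then have "real_of_int k / real N \<in> S" by simp
    then have "\<bar>real_of_int k / real N\<bar> \<le> B" by (rule B)
    moreover have "\<bar>real_of_int k / real N\<bar> = \<bar>real_of_int k\<bar> / real N" by (simp add: abs_div_pos)
    ultimately have a: "\<bar>real_of_int k\<bar> \<le> B * real N" using assms(2) by (simp add: divide_le_eq)
    have "real_of_int k \<le> B * real N" "- (B * real N) \<le> real_of_int k" using a by linarith+
    then have "k \<le> \<lceil>B * real N\<rceil>" "-\<lceil>B * real N\<rceil> \<le> k" by (simp_all add: le_ceiling_iff ceiling_le_iff) linarith+
    then show "k \<in> {-\<lceil>B * real N\<rceil>..\<lceil>B * real N\<rceil>}" by simp
  qed
  then show ?thesis by (rule finite_subset) simp
qed

lemma Cc_measurable:
  assumes "f \<in> Cc_inf"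
  shows "f \<in> borel_measurable lebesgue"
proof -
  have "\<And>x. f differentiable (at x)"
    proof -
    fix x
    from assms have "\<forall>n x. (deriv ^^ n) f differentiable (at x)" unfolding Cc_inf_def by blast
    then have "(deriv ^^ 0) f differentiable (at x)" by blast
    then show "f differentiable (at x)" by simp
  qed
  then have "continuous_on UNIV f"
    by (simp add: continuous_at_imp_continuous_on differentiable_imp_continuous_within)
  then show ?thesis
    by (simp add: borel_measurable_continuous_onI measurable_completion)
qed

lemma Cc_finite:
  assumes "f \<in> Cc_inf" "N > 0"
  shows "finite {k::int. f (real_of_int k / real N) \<noteq> 0}"
proof -
  have "bounded (closure {x. f x \<noteq> 0})"
    using assms unfolding Cc_inf_def by (simp add: compact_imp_bounded)
  from finite_grid[OF this assms(2)] show ?thesis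
    by (rule finite_subset[rotated]) (auto intro: closure_subset[THEN subsetD])
qed

lemma sq_summable_diff:
  assumes "finite {k::int. a k \<noteq> 0}" "(\<lambda>k. (b k)^2) summable_on UNIV"
  shows "(\<lambda>k. (a k - b k :: real)^2) summable_on UNIV"
proof -
  have "(\<lambda>k. (a k)^2) summable_on UNIV"
  proof -
    have "(\<lambda>k. (a k)^2) summable_on {k. a k \<noteq> 0}" using assms(1) by simp
    then show ?thesis by (subst (asm) summable_on_cong_neutral[where g="\<lambda>k. (a k)^2" and T=UNIV]) auto
  qed
  then have "(\<lambda>k. 2 * (a k)^2 + 2 * (b k)^2) summable_on UNIV"
    using assms(2) by (intro summable_on_add summable_on_cmult_right) auto
  then show ?thesis
  proof (rule summable_on_comparison_test)
    fix k
    have "0 \<le> (a k + b k)^2" by simp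
    then show "(a k - b k)^2 \<le> 2 * (a k)^2 + 2 * (b k)^2"
      by (simp add: power2_eq_square algebra_simps)
  qed simp
qed

lemma sip_le_rw:
  fixes h h' :: "int \<Rightarrow> real"
  assumes "(\<lambda>k. (h k)^2) summable_on UNIV" "\<And>k. h' k = (if k = 0 then 0 else h k)"
  shows "sip_norm \<gamma> N h' \<le> rw_norm N h"
proof -
  have s': "(\<lambda>k. (h' k)^2) summable_on UNIV"
    using assms(1) by (rule summable_on_comparison_test) (auto simp: assms(2))
  have "(\<Sum>\<^sub>\<infinity>k. (h' k)^2) \<le> (\<Sum>\<^sub>\<infinity>k. (h k)^2)"
    using s' assms(1) by (rule infsum_mono) (auto simp: assms(2))
  then have "(1 / real N) * (\<Sum>\<^sub>\<infinity>k. (h' k)^2) \<le> (1 / real N) * (\<Sum>\<^sub>\<infinity>k. (h k)^2)"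
    by (simp add: divide_right_mono)
  then show ?thesis unfolding sip_norm_def rw_norm_def by (simp add: assms(2))
qed

lemma sip_norm_nonneg:
  assumes "(\<gamma>::real) > 0"
  shows "0 \<le> sip_norm \<gamma> N h"
proof -
  have "0 \<le> (\<Sum>\<^sub>\<infinity>k. (h k)^2)" by (rule infsum_nonneg) simp
  then have "0 \<le> (1 / real N) * (\<Sum>\<^sub>\<infinity>k. (h k)^2) + sqrt 2 * \<gamma> * (h 0)^2"
    using assms by (intro add_nonneg_nonneg mult_nonneg_nonneg) auto
  then show ?thesis unfolding sip_norm_def by simp
qed

theorem proposition5p11:
  fixes \<gamma> :: real and g :: "nat \<Rightarrow> int \<Rightarrow> real" and g_lim :: "real \<Rightarrow> real"
  assumes "\<gamma> > 0"
    and "rw_bm_conv g g_lim"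
  shows "sip_sbm_conv \<gamma> (\<lambda>N k. if k = 0 then 0 else g N k)
           (\<lambda>x. if x = 0 then 0 else g_lim x)"
proof -
  from assms(2) have gl2: "\<And>N. l2_grid (g N)" and L2: "L2_line g_lim"
    and sc: "strong_conv rw_norm bm_norm Cc_inf g g_lim"
    unfolding rw_bm_conv_def by auto
  from sc obtain ft where ftC: "\<And>M. ft M \<in> Cc_inf"
    and c1: "(\<lambda>M. bm_norm (ft M - g_lim)) \<longlonglongrightarrow> 0"
    and c2: "(\<lambda>M. limsup (\<lambda>N. ereal (rw_norm N (Phi N (ft M) - g N)))) \<longlonglongrightarrow> 0"
    unfolding strong_conv_def by blast
  define gh where "gh = (\<lambda>x::real. if x = 0 then 0 else g_lim x)"
  define gNh where "gNh = (\<lambda>N (k::int). if k = 0 then 0 else g N k)"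
  define ft' where "ft' = (\<lambda>M x. ft M x + (if x = 0 then - ft M 0 else 0))"
  have gm: "g_lim \<in> borel_measurable lebesgue" and gi: "integrable lebesgue (\<lambda>x. (g_lim x)^2)"
    using L2 unfolding L2_line_def by auto
  have l2h: "l2_grid (gNh N)" for N
    using gl2[of N] unfolding l2_grid_def gNh_def
    by (rule summable_on_comparison_test) auto
  have ind: "(indicator (- {0}) :: real \<Rightarrow> real) \<in> borel_measurable lebesgue"
    by (rule measurable_completion) simp
  have ghm: "gh \<in> borel_measurable lebesgue"
  proof -
    have "gh = (\<lambda>x. indicator (- {0}) x * g_lim x)"
      unfolding gh_def by (auto simp: indicator_def)
    then show ?thesis using gm ind by simp
  qed
  have L2h: "L2_line gh"
    unfolding L2_line_def
  proof
    show "gh \<in> borel_measurable lebesgue" by (rule ghm)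
    show "integrable lebesgue (\<lambda>x. (gh x)^2)"
    proof (rule integrable_cong_AE_imp[OF gi])
      show "(\<lambda>x. (gh x)^2) \<in> borel_measurable lebesgue" using ghm by measurable
      show "AE x in lebesgue. (g_lim x)^2 = (gh x)^2"
        using AE_ne0 by eventually_elim (simp add: gh_def)
    qed
  qed
  have C: "ft' M \<in> C_sip" for M
    unfolding C_sip_def ft'_def using ftC[of M] by blast
  have n1: "sbm_norm \<gamma> (ft' M - gh) = bm_norm (ft M - g_lim)" for M
  proof -
    have fm: "ft M \<in> borel_measurable lebesgue" by (rule Cc_measurable[OF ftC])
    have m1: "(\<lambda>x. ((ft' M - gh) x)^2) \<in> borel_measurable lebesgue"
    proof -
      have "(ft' M - gh) = (\<lambda>x. indicator (- {0}) x * (ft M x - g_lim x))"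
        unfolding ft'_def gh_def by (auto simp: indicator_def fun_eq_iff)
      then show ?thesis using fm gm ind by simp
    qed
    have "integral\<^sup>L lebesgue (\<lambda>x. ((ft' M - gh) x)^2) = integral\<^sup>L lebesgue (\<lambda>x. ((ft M - g_lim) x)^2)"
    proof (rule integral_cong_AE[OF m1])
      show "(\<lambda>x. ((ft M - g_lim) x)^2) \<in> borel_measurable lebesgue" using fm gm unfolding fun_diff_def by measurable
      show "AE x in lebesgue. ((ft' M - gh) x)^2 = ((ft M - g_lim) x)^2"
        using AE_ne0 by eventually_elim (simp add: ft'_def gh_def)
    qed
    moreover have "(ft' M - gh) 0 = 0" by (simp add: ft'_def gh_def)
    ultimately show ?thesis unfolding sbm_norm_def bm_norm_def by simp
  qed
  have n2: "limsup (\<lambda>N. ereal (sip_norm \<gamma> N (Phi N (ft' M) - gNh N)))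
      \<le> limsup (\<lambda>N. ereal (rw_norm N (Phi N (ft M) - g N)))" for M
  proof (rule Limsup_mono)
    show "\<forall>\<^sub>F N in sequentially. ereal (sip_norm \<gamma> N (Phi N (ft' M) - gNh N))
        \<le> ereal (rw_norm N (Phi N (ft M) - g N))"
      using eventually_gt_at_top[of 0]
    proof eventually_elim
      case (elim N)
      have "(\<lambda>k. ((Phi N (ft M) - g N) k)^2) summable_on UNIV"
        using sq_summable_diff[OF Cc_finite[OF ftC elim] gl2[of N, unfolded l2_grid_def]]
        by (simp add: Phi_def)
      then have "sip_norm \<gamma> N (Phi N (ft' M) - gNh N) \<le> rw_norm N (Phi N (ft M) - g N)"
        by (rule sip_le_rw) (use elim in \<open>auto simp: Phi_def ft'_def gNh_def\<close>)
      then show ?case by simp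
    qed
  qed
  have n3: "0 \<le> limsup (\<lambda>N. ereal (sip_norm \<gamma> N (Phi N (ft' M) - gNh N)))" for M
    by (rule le_Limsup) (auto intro!: always_eventually sip_norm_nonneg assms(1))
  have c2': "(\<lambda>M. limsup (\<lambda>N. ereal (sip_norm \<gamma> N (Phi N (ft' M) - gNh N)))) \<longlonglongrightarrow> 0"
    by (rule tendsto_sandwich[OF _ _ tendsto_const c2]) (use n2 n3 in auto)
  have "strong_conv (sip_norm \<gamma>) (sbm_norm \<gamma>) C_sip gNh gh"
    unfolding strong_conv_def using C c1 c2' by (intro exI[of _ ft']) (simp add: n1)
  then show ?thesis using l2h L2h unfolding sip_sbm_conv_def gh_def gNh_def by blast
qed

end
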